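(* In the symmetric-erasure retransmission model described in the context, for every realization of the erasure variables, every vertex $v\in\mathcal V$ and every $t\ge 0$, there exists a time-like sequence of length $t$ ending at $v$ that has at least $t-n_v(t)$ erased steps.
   Context: Let $\mathcal G=(\mathcal V,\mathcal E)$ be a finite connected undirected simple graph with $N=|\mathcal V|$ vertices and maximum degree $\Delta$; $\mathcal N_v$ denotes the set of neighbours of $v$. Fix an erasure probability $p\in[0,1]$. Erasures are symmetric: for every undirected edge $e\in\mathcal E$ and every round $t\ge 1$ there is a random variable $S^e_t\in\{0,1\}$ with $P(S^e_t=1)=1-p$ ($S^e_t=1$ means the edge works in round $t$, $S^e_t=0$ means the packets in both directions on $e$ are erased in round $t$), and all these variables are mutually independent. The retransmission protocol for distributed consensus is described by integer state variables $n_{vu}(t)$, for every ordered pair $(v,u)$ with $u\in\mathcal N_v$ and every $t\ge 0$ (the index of the latest iterate of node $u$ available at node $v$ after round $t$), together with $n_v(t)=1+\min_{u\in\mathcal N_v} n_{vu}(t)$ (the number of iterations of the consensus update $x^v_{k+1}=x^v_k-\epsilon\sum_{u\in\mathcal N_v}(x^v_k-x^u_k)$ that node $v$ has completed after round $t$). Initially $n_{vu}(0)=-1$ for all such pairs (so $n_v(0)=0$), and for all $t\ge 0$ $$n_{vu}(t+1)=n_{vu}(t)+S^{\{u,v\}}_{t+1}\cdot\mathbf 1\{n_u(t)>n_{vu}(t)\}.$$ Node $u$ is said to transmit a "wait" to node $v$ in round $t+1$ iff $n_{vu}(t)=n_u(t)$. A time-like sequence of length $t$ ending at $v$ is a sequence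 of vertices $(w_t,w_{t-1},\dots,w_0)$ with $w_t=v$ such that for each $1\le\tau\le t$ either $w_\tau=w_{\tau-1}$ or $\{w_\tau,w_{\tau-1}\}\in\mathcal E$ (equivalently, a path in the "trellis" whose vertices are the copies $v_\tau$, $v\in\mathcal V$, $\tau\ge0$, and whose edges join $v_\tau$ and $u_{\tau-1}$ whenever $u=v$ or $\{u,v\}\in\mathcal E$). Its $\tau$-th step ($1\le\tau\le t$) is called erased if $w_\tau\ne w_{\tau-1}$ and $S^{\{w_\tau,w_{\tau-1}\}}_\tau=0$. *)

theory Defs
  imports Main
begin

definition simple_graph :: "'a set \<Rightarrow> ('a \<Rightarrow> 'a \<Rightarrow> bool) \<Rightarrow> bool" where
  "simple_graph V E \<longleftrightarrow> finite V \<and> V \<noteq> {} \<and>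
     (\<forall>u v. E u v \<longrightarrow> u \<in> V \<and> v \<in> V) \<and>
     (\<forall>u v. E u v \<longrightarrow> E v u) \<and> (\<forall>v. \<not> E v v)"

definition connected_graph :: "'a set \<Rightarrow> ('a \<Rightarrow> 'a \<Rightarrow> bool) \<Rightarrow> bool" where
  "connected_graph V E \<longleftrightarrow> (\<forall>u\<in>V. \<forall>v\<in>V. E\<^sup>*\<^sup>* u v)"

definition nbrs :: "'a set \<Rightarrow> ('a \<Rightarrow> 'a \<Rightarrow> bool) \<Rightarrow> 'a \<Rightarrow> 'a set" where
  "nbrs V E v = {u \<in> V. E v u}"

text \<open>State variables n_vu(t) of the retransmission protocol, for a realization S of the
  erasure variables (S e t = True iff undirected edge e works in round t).\<close>
fun nvu :: "'a set \<Rightarrow> ('a \<Rightarrow> 'a \<Rightarrow> bool) \<Rightarrow> ('a set \<Rightarrow> nat \<Rightarrow> bool) \<Rightarrow> nat \<Rightarrow> 'a \<Rightarrow> 'a \<Rightarrow> int" where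
  "nvu V E S 0 v u = -1"
| "nvu V E S (Suc t) v u =
     nvu V E S t v u +
     (if S {u, v} (Suc t) \<and> 1 + Min (nvu V E S t u ` nbrs V E u) > nvu V E S t v u then 1 else 0)"

definition nv :: "'a set \<Rightarrow> ('a \<Rightarrow> 'a \<Rightarrow> bool) \<Rightarrow> ('a set \<Rightarrow> nat \<Rightarrow> bool) \<Rightarrow> nat \<Rightarrow> 'a \<Rightarrow> int" where
  "nv V E S t v = 1 + Min (nvu V E S t v ` nbrs V E v)"

lemma nvu_Suc_nv:
  "nvu V E S (Suc t) v u = nvu V E S t v u +
     (if S {u, v} (Suc t) \<and> nv V E S t u > nvu V E S t v u then 1 else 0)"
  by (simp add: nv_def)

text \<open>Time-like sequence (w_t, ..., w_0) of length t ending at v, represented by w :: nat => 'a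
  (only values at indices 0..t matter).\<close>
definition time_like :: "'a set \<Rightarrow> ('a \<Rightarrow> 'a \<Rightarrow> bool) \<Rightarrow> nat \<Rightarrow> 'a \<Rightarrow> (nat \<Rightarrow> 'a) \<Rightarrow> bool" where
  "time_like V E t v w \<longleftrightarrow> w t = v \<and> (\<forall>\<tau>\<le>t. w \<tau> \<in> V) \<and>
     (\<forall>\<tau>\<in>{1..t}. w \<tau> = w (\<tau> - 1) \<or> E (w \<tau>) (w (\<tau> - 1)))"

definition erased_steps :: "('a set \<Rightarrow> nat \<Rightarrow> bool) \<Rightarrow> nat \<Rightarrow> (nat \<Rightarrow> 'a) \<Rightarrow> nat set" where
  "erased_steps S t w = {\<tau> \<in> {1..t}. w \<tau> \<noteq> w (\<tau> - 1) \<and> \<not> S {w \<tau>, w (\<tau> - 1)} \<tau>}"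

end

theory Submission
  imports Defs
begin

lemma ext_tl:
  assumes tl: "time_like V E t x w" and "x' \<in> V" and "x' = x \<or> E x' x"
  shows "time_like V E (Suc t) x' (w(Suc t := x'))"
  using assms unfolding time_like_def
  by (auto simp: le_Suc_eq)

lemma ext_er:
  assumes tl: "time_like V E t x w"
  shows "card (erased_steps S (Suc t) (w(Suc t := x'))) =
     card (erased_steps S t w) + (if x' \<noteq> x \<and> \<not> S {x', x} (Suc t) then 1 else 0)"
proof -
  have wt: "w t = x" using tl by (simp add: time_like_def)
  have eq: "erased_steps S (Suc t) (w(Suc t := x')) =
     erased_steps S t w \<union> (if x' \<noteq> x \<and> \<not> S {x', x} (Suc t) then {Suc t} else {})"
    using wt by (auto simp: erased_steps_def le_Suc_eq)
  have fin: "finite (erased_steps S t w)" by (simp add: erased_steps_def)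
  have nin: "Suc t \<notin> erased_steps S t w" by (simp add: erased_steps_def)
  show ?thesis unfolding eq using fin nin by auto
qed

definition PP where
  "PP V E S t x k \<longleftrightarrow> (\<exists>w. time_like V E t x w \<and> k \<le> int (card (erased_steps S t w)))"

lemma PP_mono: "PP V E S t x k \<Longrightarrow> k' \<le> k \<Longrightarrow> PP V E S t x k'"
  unfolding PP_def by force

lemma PP_ext:
  assumes "PP V E S t x k" and "x' \<in> V" and "x' = x \<or> E x' x"
  shows "PP V E S (Suc t) x' (k + (if x' \<noteq> x \<and> \<not> S {x', x} (Suc t) then 1 else 0))"
proof -
  obtain w where w: "time_like V E t x w" "k \<le> int (card (erased_steps S t w))"
    using assms(1) unfolding PP_def by blast
  show ?thesis unfolding PP_def
    apply (rule exI[of _ "w(Suc t := x')"])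
    using ext_tl[OF w(1) assms(2,3)] ext_er[OF w(1), of S x'] w(2) by auto
qed

lemma PP_ext0:
  assumes "PP V E S t x k" and "x' \<in> V" and "x' = x \<or> E x' x"
  shows "PP V E S (Suc t) x' k"
  using PP_ext[OF assms] by (rule PP_mono) auto

lemma PP_ext1:
  assumes "PP V E S t x k" and "x' \<in> V" and "E x' x" and "\<not> S {x', x} (Suc t)"
    and "\<not> E x x"
  shows "PP V E S (Suc t) x' (k + 1)"
proof -
  have "x' \<noteq> x" using assms(3,5) by auto
  then show ?thesis using PP_ext[OF assms(1,2)] assms(3,4) by auto
qed

lemma main:
  assumes g: "simple_graph V E"
  shows "\<forall>v u. v \<in> V \<and> u \<in> nbrs V E v \<longrightarrow>
     PP V E S t v (int t - 1 - nvu V E S t v u) \<and> PP V E S t u (int t - 1 - nvu V E S t v u)"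
proof (induction t)
  case 0
  show ?case
  proof (intro allI impI)
    fix v u assume a: "v \<in> V \<and> u \<in> nbrs V E v"
    have "u \<in> V" using a by (simp add: nbrs_def)
    have "PP V E S 0 x 0" if "x \<in> V" for x
      unfolding PP_def time_like_def using that by (intro exI[of _ "\<lambda>_. x"]) auto
    then show "PP V E S 0 v (int 0 - 1 - nvu V E S 0 v u) \<and> PP V E S 0 u (int 0 - 1 - nvu V E S 0 v u)"
      using a \<open>u \<in> V\<close> by simp
  qed
next
  case (Suc t)
  have sym: "\<And>a b. E a b \<Longrightarrow> E b a" and irr: "\<And>a. \<not> E a a"
    and inV: "\<And>a b. E a b \<Longrightarrow> a \<in> V \<and> b \<in> V" and finV: "finite V"
    using g by (auto simp: simple_graph_def)
  show ?case
  proof (intro allI impI)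
    fix v u assume a: "v \<in> V \<and> u \<in> nbrs V E v"
    have vV: "v \<in> V" and uV: "u \<in> V" and Evu: "E v u" using a by (auto simp: nbrs_def)
    have Euv: "E u v" using sym Evu .
    let ?k = "int t - 1 - nvu V E S t v u"
    have IHv: "PP V E S t v ?k" and IHu: "PP V E S t u ?k" using Suc a by auto
    show "PP V E S (Suc t) v (int (Suc t) - 1 - nvu V E S (Suc t) v u) \<and>
          PP V E S (Suc t) u (int (Suc t) - 1 - nvu V E S (Suc t) v u)"
    proof (cases "S {u, v} (Suc t) \<and> nv V E S t u > nvu V E S t v u")
      case True
      then have e: "int (Suc t) - 1 - nvu V E S (Suc t) v u = ?k"
        by (simp add: nvu_Suc_nv del: nvu.simps)
      show ?thesis unfolding e
        using PP_ext0[OF IHv vV] PP_ext0[OF IHu uV] by auto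
    next
      case False
      then have e: "int (Suc t) - 1 - nvu V E S (Suc t) v u = ?k + 1"
        by (simp add: nvu_Suc_nv del: nvu.simps)
      show ?thesis unfolding e
      proof (cases "S {u, v} (Suc t)")
        case True
        then have le: "nv V E S t u \<le> nvu V E S t v u" using False by auto
        have fin: "finite (nbrs V E u)" using finV by (simp add: nbrs_def)
        have ne: "v \<in> nbrs V E u" using Euv vV by (simp add: nbrs_def)
        have "Min (nvu V E S t u ` nbrs V E u) \<in> nvu V E S t u ` nbrs V E u"
          using fin ne by (intro Min_in) auto
        then obtain w where w: "w \<in> nbrs V E u"
          and wm: "nvu V E S t u w = Min (nvu V E S t u ` nbrs V E u)" by auto
        have "PP V E S t u (int t - 1 - nvu V E S t u w)" using Suc uV w by auto
        then have P: "PP V E S t u (?k + 1)"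
          by (rule PP_mono) (use le wm in \<open>simp add: nv_def\<close>)
        show "PP V E S (Suc t) v (?k + 1) \<and> PP V E S (Suc t) u (?k + 1)"
          using PP_ext0[OF P vV] PP_ext0[OF P uV] Evu by auto
      next
        case False
        have c1: "\<not> S {v, u} (Suc t)" using False by (simp add: insert_commute)
        show "PP V E S (Suc t) v (?k + 1) \<and> PP V E S (Suc t) u (?k + 1)"
          using PP_ext1[OF IHu vV Evu c1 irr] PP_ext1[OF IHv uV Euv False irr] by auto
      qed
    qed
  qed
qed

theorem lemma5:
  fixes V :: "'a set" and E :: "'a \<Rightarrow> 'a \<Rightarrow> bool" and S :: "'a set \<Rightarrow> nat \<Rightarrow> bool"
  assumes "simple_graph V E" and "connected_graph V E" and "card V \<ge> 2"
    and "v \<in> V"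
  shows "\<exists>w. time_like V E t v w \<and>
           int t - nv V E S t v \<le> int (card (erased_steps S t w))"
proof -
  have finV: "finite V" using assms(1) by (simp add: simple_graph_def)
  obtain x where x: "x \<in> V" "x \<noteq> v"
  proof -
    have "\<not> V \<subseteq> {v}"
    proof
      assume "V \<subseteq> {v}"
      then have "card V \<le> card {v}" by (intro card_mono) auto
      then show False using assms(3) by simp
    qed
    then show ?thesis using that by blast
  qed
  have "E\<^sup>*\<^sup>* v x" using assms(2) x assms(4) by (simp add: connected_graph_def)
  then obtain y where "E v y" using x(2)
    by (metis converse_rtranclpE)
  then have ne: "y \<in> nbrs V E v" using assms(1) by (simp add: nbrs_def simple_graph_def)
  have fin: "finite (nbrs V E v)" using finV by (simp add: nbrs_def)
  have "Min (nvu V E S t v ` nbrs V E v) \<in> nvu V E S t v ` nbrs V E v"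
    using fin ne by (intro Min_in) auto
  then obtain u where u: "u \<in> nbrs V E v"
    and um: "nvu V E S t v u = Min (nvu V E S t v ` nbrs V E v)" by auto
  have "PP V E S t v (int t - 1 - nvu V E S t v u)"
    using main[OF assms(1), of S t] assms(4) u by auto
  then have "PP V E S t v (int t - nv V E S t v)"
    by (rule PP_mono) (simp add: nv_def um)
  then show ?thesis unfolding PP_def .
qed

end
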